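(* Let $n\ge1$, $t_1<\dots<t_n$, $p_0,\dots,p_n>0$, $q_k=p_k^{-1/2}$, and let $a_k^\pm,b_k^\pm$ be the connection coefficients defined in the context. Then for every $\lambda\in(0,\infty)$, $$\frac{|b_0^+(\lambda)|^2}{q_0^2}+\frac{1}{q_0q_n}=\frac{|a_0^+(\lambda)|^2}{q_0^2}=\frac{|b_n^-(\lambda)|^2}{q_n^2}=\frac{1}{q_0q_n}+\frac{|a_n^-(\lambda)|^2}{q_n^2}.$$
   Context: For $z\in\mathbb{C}\setminus(-\infty,0]$, $\sqrt z$ is the principal square root. For $1\le k\le n$ let $$L_k(z)=\frac12\begin{bmatrix}\left(1+\frac{q_k}{q_{k-1}}\right)e^{it_k(q_{k-1}-q_k)\sqrt z} & \left(1-\frac{q_k}{q_{k-1}}\right)e^{-it_k(q_{k-1}+q_k)\sqrt z}\\ \left(1-\frac{q_k}{q_{k-1}}\right)e^{it_k(q_{k-1}+q_k)\sqrt z} & \left(1+\frac{q_k}{q_{k-1}}\right)e^{-it_k(q_{k-1}-q_k)\sqrt z}\end{bmatrix},\qquad R_k(z)=L_k(z)^{-1}.$$ The connection coefficients are $a_n^+=1$, $b_n^+=0$, $(a_l^+,b_l^+)^T=R_{l+1}(z)(a_{l+1}^+,b_{l+1}^+)^T$ for $l=n-1,\dots,0$; and $a_0^-=0$, $b_0^-=1$, $(a_j^-,b_j^-)^T=L_j(z)(a_{j-1}^-,b_{j-1}^-)^T$ for $j=1,\dots,n$. *)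

theory Defs
  imports "HOL-Analysis.Analysis"
begin

definition qcoef :: "(nat \<Rightarrow> real) \<Rightarrow> nat \<Rightarrow> real" where
  "qcoef p k = p k powr (-1/2)"

definition Lmat :: "(nat \<Rightarrow> real) \<Rightarrow> (nat \<Rightarrow> real) \<Rightarrow> nat \<Rightarrow> complex \<Rightarrow> complex^2^2" where
  "Lmat t q k z =
    (let r = complex_of_real (q k / q (k - 1));
         s = csqrt z;
         tk = complex_of_real (t k);
         dm = complex_of_real (q (k - 1) - q k);
         dp = complex_of_real (q (k - 1) + q k)
     in vector [
          vector [(1/2) * (1 + r) * exp (\<i> * tk * dm * s), (1/2) * (1 - r) * exp (- \<i> * tk * dp * s)],
          vector [(1/2) * (1 - r) * exp (\<i> * tk * dp * s), (1/2) * (1 + r) * exp (- \<i> * tk * dm * s)]])"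

definition Rmat :: "(nat \<Rightarrow> real) \<Rightarrow> (nat \<Rightarrow> real) \<Rightarrow> nat \<Rightarrow> complex \<Rightarrow> complex^2^2" where
  "Rmat t q k z = matrix_inv (Lmat t q k z)"

text \<open>plus_aux t q n z j = (a_{n-j}^+, b_{n-j}^+)\<close>
fun plus_aux :: "(nat \<Rightarrow> real) \<Rightarrow> (nat \<Rightarrow> real) \<Rightarrow> nat \<Rightarrow> complex \<Rightarrow> nat \<Rightarrow> complex^2" where
  "plus_aux t q n z 0 = vector [1, 0]"
| "plus_aux t q n z (Suc j) = Rmat t q (n - j) z *v plus_aux t q n z j"

definition coef_plus :: "(nat \<Rightarrow> real) \<Rightarrow> (nat \<Rightarrow> real) \<Rightarrow> nat \<Rightarrow> complex \<Rightarrow> nat \<Rightarrow> complex^2" where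
  "coef_plus t q n z l = plus_aux t q n z (n - l)"

text \<open>coef_minus t q z j = (a_j^-, b_j^-)\<close>
fun coef_minus :: "(nat \<Rightarrow> real) \<Rightarrow> (nat \<Rightarrow> real) \<Rightarrow> complex \<Rightarrow> nat \<Rightarrow> complex^2" where
  "coef_minus t q z 0 = vector [0, 1]"
| "coef_minus t q z (Suc j) = Lmat t q (Suc j) z *v coef_minus t q z j"

end

theory Submission
  imports Defs
begin

lemma L_entries:
  fixes lam :: real and t q :: "nat \<Rightarrow> real" and k :: nat
  assumes "lam \<ge> 0"
  defines "r \<equiv> q k / q (k - 1)"
  defines "x \<equiv> t k * (q (k - 1) - q k) * sqrt lam"
  defines "y \<equiv> t k * (q (k - 1) + q k) * sqrt lam"
  shows "Lmat t q k (complex_of_real lam) $ 1 $ 1 = of_real ((1 + r)/2) * exp (\<i> * of_real x)"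
    and "Lmat t q k (complex_of_real lam) $ 2 $ 2 = of_real ((1 + r)/2) * exp (- (\<i> * of_real x))"
    and "Lmat t q k (complex_of_real lam) $ 1 $ 2 = of_real ((1 - r)/2) * exp (- (\<i> * of_real y))"
    and "Lmat t q k (complex_of_real lam) $ 2 $ 1 = of_real ((1 - r)/2) * exp (\<i> * of_real y)"
  using assms by (simp_all add: Lmat_def Let_def csqrt_of_real r_def x_def y_def mult.assoc)


definition formM :: "complex^2^2 \<Rightarrow> real \<Rightarrow> bool" where
  "formM M d \<longleftrightarrow> M$2$1 = cnj (M$1$2) \<and> M$2$2 = cnj (M$1$1)
     \<and> (cmod (M$1$1))\<^sup>2 - (cmod (M$1$2))\<^sup>2 = d"

lemma formM_L:
  fixes lam :: real and t q :: "nat \<Rightarrow> real" and k :: nat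
  assumes "lam \<ge> 0"
  shows "formM (Lmat t q k (complex_of_real lam)) (q k / q (k - 1))"
proof -
  define r where "r = q k / q (k - 1)"
  have "(cmod (of_real ((1 + r)/2) * exp (\<i> * of_real x)))\<^sup>2 -
        (cmod (of_real ((1 - r)/2) * exp (- (\<i> * of_real y))))\<^sup>2 = r" for x y :: real
  proof -
    have "exp (- (\<i> * of_real y)) = exp (\<i> * of_real (-y))" by simp
    then have "(cmod (of_real ((1 + r)/2) * exp (\<i> * of_real x)))\<^sup>2 -
        (cmod (of_real ((1 - r)/2) * exp (- (\<i> * of_real y))))\<^sup>2 = ((1+r)/2)\<^sup>2 - ((1-r)/2)\<^sup>2"
      by (simp only: norm_mult norm_exp_i_times norm_of_real mult_1_right power2_abs)
    also have "\<dots> = r" by (simp add: power2_eq_square field_simps)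
    finally show ?thesis .
  qed
  note nrm = this
  show ?thesis
    unfolding formM_def L_entries[OF assms] r_def[symmetric]
    by (simp only: nrm complex_cnj_mult complex_cnj_complex_of_real exp_cnj complex_cnj_minus
          complex_cnj_i complex_cnj_complex_of_real mult_minus_left minus_minus simp_thms)
qed

lemma formM_mult:
  assumes "formM A d" "formM B e"
  shows "formM (A ** B) (d * e)"
proof -
  have cm: "of_real ((cmod z)\<^sup>2) = z * cnj z" for z by (rule complex_norm_square)
  let ?u = "A$1$1" and ?v = "A$1$2" and ?a = "B$1$1" and ?b = "B$1$2"
  have e: "(A ** B)$i$j = A$i$1 * B$1$j + A$i$2 * B$2$j" for i j
    by (simp add: matrix_matrix_mult_def sum_2)
  have A: "A$2$1 = cnj ?v" "A$2$2 = cnj ?u" "(cmod ?u)\<^sup>2 - (cmod ?v)\<^sup>2 = d"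
    using assms(1) by (auto simp: formM_def)
  have B: "B$2$1 = cnj ?b" "B$2$2 = cnj ?a" "(cmod ?a)\<^sup>2 - (cmod ?b)\<^sup>2 = e"
    using assms(2) by (auto simp: formM_def)
  have "complex_of_real ((cmod (?u * ?a + ?v * cnj ?b))\<^sup>2 - (cmod (?u * ?b + ?v * cnj ?a))\<^sup>2)
     = of_real (((cmod ?u)\<^sup>2 - (cmod ?v)\<^sup>2) * ((cmod ?a)\<^sup>2 - (cmod ?b)\<^sup>2))"
    unfolding of_real_diff of_real_mult cm by (simp add: algebra_simps)
  then have "(cmod (?u * ?a + ?v * cnj ?b))\<^sup>2 - (cmod (?u * ?b + ?v * cnj ?a))\<^sup>2 = d * e"
    using A B of_real_eq_iff by metis
  then show ?thesis unfolding formM_def e A B by (simp add: algebra_simps)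
qed

lemma det_formM: "formM M d \<Longrightarrow> det M = of_real d"
  unfolding formM_def det_2
  by (metis (no_types, lifting) complex_norm_square of_real_diff)

fun Mprod :: "(nat \<Rightarrow> real) \<Rightarrow> (nat \<Rightarrow> real) \<Rightarrow> complex \<Rightarrow> nat \<Rightarrow> complex^2^2" where
  "Mprod t q z 0 = mat 1"
| "Mprod t q z (Suc m) = Lmat t q (Suc m) z ** Mprod t q z m"

lemma formM_Mprod:
  assumes "lam \<ge> 0" "\<And>k. k \<le> n \<Longrightarrow> q k > 0" "m \<le> n"
  shows "formM (Mprod t q (complex_of_real lam) m) (q m / q 0)"
  using assms(3)
proof (induction m)
  case 0
  then show ?case using assms(2)[of 0] by (simp add: formM_def mat_def)
next
  case (Suc m)
  have "formM (Mprod t q (complex_of_real lam) (Suc m)) (q (Suc m) / q m * (q m / q 0))"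
    using formM_mult[OF formM_L[OF assms(1), of t q "Suc m"] Suc.IH] Suc.prems by simp
  moreover have "q m > 0" using assms(2) Suc.prems by simp
  ultimately show ?case by simp
qed

lemma minus_Mprod: "coef_minus t q z m = Mprod t q z m *v vector [0, 1]"
  by (induction m) (simp_all add: matrix_vector_mul_assoc)

lemma LR:
  assumes "lam \<ge> 0" "q k > 0" "q (k - 1) > 0"
  shows "Lmat t q k (complex_of_real lam) ** Rmat t q k (complex_of_real lam) = mat 1"
proof -
  let ?L = "Lmat t q k (complex_of_real lam)"
  have "det ?L = of_real (q k / q (k - 1))" by (rule det_formM[OF formM_L[OF assms(1)]])
  then have "det ?L \<noteq> 0" using assms by simp
  then have "invertible ?L" by (simp add: invertible_det_nz)
  then have "\<exists>A'. ?L ** A' = mat 1 \<and> A' ** ?L = mat 1" unfolding invertible_def .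
  from someI_ex[OF this] show ?thesis unfolding Rmat_def matrix_inv_def by blast
qed

lemma plus_step:
  assumes "l < n"
  shows "coef_plus t q n z l = Rmat t q (Suc l) z *v coef_plus t q n z (Suc l)"
proof -
  have "n - l = Suc (n - Suc l)" using assms by simp
  moreover have "n - (n - Suc l) = Suc l" using assms by simp
  ultimately show ?thesis unfolding coef_plus_def by simp
qed

lemma plus_Mprod:
  assumes "lam \<ge> 0" "\<And>k. k \<le> n \<Longrightarrow> q k > 0" "l \<le> n"
  shows "Mprod t q (complex_of_real lam) l *v coef_plus t q n (complex_of_real lam) 0
         = coef_plus t q n (complex_of_real lam) l"
  using assms(3)
proof (induction l)
  case 0
  then show ?case by simp
next
  case (Suc l)
  let ?z = "complex_of_real lam"
  have "Mprod t q ?z (Suc l) *v coef_plus t q n ?z 0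
      = Lmat t q (Suc l) ?z *v coef_plus t q n ?z l"
    using Suc by (simp add: matrix_vector_mul_assoc[symmetric])
  also have "\<dots> = (Lmat t q (Suc l) ?z ** Rmat t q (Suc l) ?z) *v coef_plus t q n ?z (Suc l)"
    using plus_step[of l n t q ?z] Suc.prems by (simp add: matrix_vector_mul_assoc)
  also have "\<dots> = coef_plus t q n ?z (Suc l)"
    using LR[OF assms(1), of q "Suc l" t] assms(2) Suc.prems by simp
  finally show ?case .
qed

theorem corollary3p5:
  fixes n :: nat and t p :: "nat \<Rightarrow> real" and lam :: real
  assumes "n \<ge> 1"
    and "\<And>i j. 1 \<le> i \<Longrightarrow> i < j \<Longrightarrow> j \<le> n \<Longrightarrow> t i < t j"
    and "\<And>k. k \<le> n \<Longrightarrow> p k > 0"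
    and "lam > 0"
  defines "q \<equiv> qcoef p"
  defines "ap \<equiv> coef_plus t q n (complex_of_real lam) 0 $ 1"
      and "bp \<equiv> coef_plus t q n (complex_of_real lam) 0 $ 2"
      and "am \<equiv> coef_minus t q (complex_of_real lam) n $ 1"
      and "bm \<equiv> coef_minus t q (complex_of_real lam) n $ 2"
  shows "(cmod bp)\<^sup>2 / (q 0)\<^sup>2 + 1 / (q 0 * q n) = (cmod ap)\<^sup>2 / (q 0)\<^sup>2
       \<and> (cmod ap)\<^sup>2 / (q 0)\<^sup>2 = (cmod bm)\<^sup>2 / (q n)\<^sup>2
       \<and> (cmod bm)\<^sup>2 / (q n)\<^sup>2 = 1 / (q 0 * q n) + (cmod am)\<^sup>2 / (q n)\<^sup>2"
proof -
  let ?z = "complex_of_real lam"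
  have lam0: "lam \<ge> 0" using assms(4) by simp
  have qpos: "\<And>k. k \<le> n \<Longrightarrow> q k > 0" using assms(3) unfolding q_def qcoef_def by (metis powr_gt_zero less_irrefl)
  define M where "M = Mprod t q ?z n"
  define D where "D = q n / q 0"
  have q0: "q 0 > 0" and qn: "q n > 0" using qpos by auto
  have Dpos: "D > 0" using q0 qn by (simp add: D_def)
  have F: "formM M D" unfolding M_def D_def by (rule formM_Mprod[OF lam0 qpos order.refl])
  let ?U = "M$1$1" and ?V = "M$1$2"
  have M21: "M$2$1 = cnj ?V" and M22: "M$2$2 = cnj ?U" and Dn: "(cmod ?U)\<^sup>2 - (cmod ?V)\<^sup>2 = D"
    using F by (auto simp: formM_def)
  have DC: "?U * cnj ?U - ?V * cnj ?V = of_real D"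
    using det_formM[OF F] by (simp add: det_2 M21 M22)
  have mv: "(A *v x)$i = A$i$1 * x$1 + A$i$2 * x$2" for A :: "complex^2^2" and x i
    by (simp add: matrix_vector_mult_def sum_2)
  have am: "am = ?V" and bm: "bm = cnj ?U"
    unfolding am_def bm_def minus_Mprod M_def[symmetric] mv M22 by simp_all
  have Mx: "M *v coef_plus t q n ?z 0 = vector [1, 0]"
    unfolding M_def using plus_Mprod[OF lam0 qpos order.refl, where t=t]
    by (simp add: coef_plus_def)
  have e1: "?U * ap + ?V * bp = 1" using arg_cong[OF Mx, of "\<lambda>v. v$1"]
    unfolding mv ap_def bp_def by simp
  have e2: "cnj ?V * ap + cnj ?U * bp = 0" using arg_cong[OF Mx, of "\<lambda>v. v$2"]
    unfolding mv ap_def bp_def M21 M22 by simp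
  have "(?U * cnj ?U - ?V * cnj ?V) * ap = cnj ?U * (?U * ap + ?V * bp) - ?V * (cnj ?V * ap + cnj ?U * bp)"
    by (simp add: algebra_simps)
  then have "(?U * cnj ?U - ?V * cnj ?V) * ap = cnj ?U" unfolding e1 e2 by simp
  then have ap: "ap = cnj ?U / of_real D" using Dpos DC by (simp add: field_simps)
  have "(?V * cnj ?V - ?U * cnj ?U) * bp = cnj ?V * (?U * ap + ?V * bp) - ?U * (cnj ?V * ap + cnj ?U * bp)"
    by (simp add: algebra_simps)
  then have "(?V * cnj ?V - ?U * cnj ?U) * bp = cnj ?V" unfolding e1 e2 by simp
  then have "(?U * cnj ?U - ?V * cnj ?V) * bp = - cnj ?V" by (simp add: algebra_simps)
  then have bp: "bp = - cnj ?V / of_real D" using Dpos DC by (simp add: field_simps)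
  have nap: "cmod ap = cmod ?U / D" using Dpos by (simp add: ap norm_divide)
  have nbp: "cmod bp = cmod ?V / D" using Dpos by (simp add: bp norm_divide)
  have nbm: "cmod bm = cmod ?U" by (simp add: bm)
  have D': "q n = D * q 0" using q0 by (simp add: D_def)
  have V2: "(cmod ?V)\<^sup>2 = (cmod ?U)\<^sup>2 - D" using Dn by simp
  show ?thesis
    unfolding nap nbp nbm am D' V2
    using Dpos q0 Dn by (simp add: field_simps power2_eq_square)
qed

end
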